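(* Let $0<p<1$, $q=1-p$, $N\ge1$, let $\sigma=(\sigma_1,\dots,\sigma_N)\in S_N$, let $\mathbf{x}=(x_1,\dots,x_N)$ and $\mathbf{y}=(y_1,\dots,y_N)$ be integer vectors with $x_1>x_2>\dots>x_N$ and $y_1>y_2>\dots>y_N$, let $t\in\mathbb{Z}$, and let $$\mathcal{F}_\sigma=\prod_{i=1}^N F_{\sigma_i-i}(x_i-y_{\sigma_i},t).$$ (1) If $t=0$, then $\mathcal{F}_\sigma=0$ unless $\sigma$ is the identity permutation and $\mathbf{x}=\mathbf{y}$. (2) Let $t=1$ and let $(i_1,\dots,i_k)$ be a cycle of $\sigma$ with $k>1$ elements, i.e. $\sigma_{i_1}=i_2,\sigma_{i_2}=i_3,\dots,\sigma_{i_k}=i_1$. Then $\mathcal{F}_\sigma=0$ unless, up to a cyclic shift of the indices of the cycle, $i_2=i_1+1,\dots,i_k=i_1+k-1$ and $y_{i_1}=x_{i_1}$, $x_{i_2}=y_{i_2}=x_{i_1}-1,\dots,x_{i_k}=y_{i_k}=x_{i_1}-k+1$.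
   Context: For $n,x\in\mathbb{Z}$: $F_n(x,t)=\frac{1}{2\pi i}\oint_{\Gamma_0}\frac{dw}{w}\left(q+\frac{p}{w}\right)^t(1-w)^{-n}w^x$ for $t\ge0$, and $F_n(x,t)=0$ for $t<0$, where $\Gamma_0$ is a positively oriented contour encircling the origin and leaving $w=1$ outside. *)

theory Defs
  imports "HOL-Complex_Analysis.Complex_Analysis"
begin

text \<open>The kernel F_n(x,t) with parameter p (q = 1 - p). The contour Gamma_0 is taken
to be the circle of radius 1/2 around 0, which encircles the origin and leaves w = 1 outside.\<close>
definition F :: "real \<Rightarrow> int \<Rightarrow> int \<Rightarrow> int \<Rightarrow> complex" where
  "F p n x t =
     (if t < 0 then 0
      else contour_integral (circlepath 0 (1/2))
             (\<lambda>w. (1 / w) * (complex_of_real (1 - p) + complex_of_real p / w) ^ nat t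
                   * (1 - w) powi (- n) * w powi x) / (2 * of_real pi * \<i>))"

end

theory Submission
  imports Defs
begin


lemma circ_int_powi:
  fixes e :: int assumes e: "e \<noteq> -1"
  shows "((\<lambda>w::complex. w powi e) has_contour_integral 0) (circlepath 0 (1/2))"
proof (rule Cauchy_theorem_primitive[where S="-{0}" and f="\<lambda>w. w powi (e+1) / of_int (e+1)"])
  fix w :: complex assume "w \<in> - {0}"
  hence w: "w \<noteq> 0" by auto
  have "((\<lambda>w. w powi (e+1) / of_int (e+1)) has_field_derivative
        (of_int (e+1) * w powi (e+1-1) * 1) / of_int (e+1)) (at w within -{0})"
    by (rule DERIV_cdivide[OF DERIV_power_int[OF DERIV_ident]]) (use w in auto)
  moreover have "(of_int (e+1) * w powi (e+1-1) * 1) / of_int (e+1) = w powi e"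
  proof -
    have nz: "(of_int (e+1)::complex) \<noteq> 0" using e by (simp only: of_int_eq_0_iff) 
    show ?thesis using nz by simp
  qed
  ultimately show "((\<lambda>w. w powi (e+1) / of_int (e+1)) has_field_derivative w powi e) (at w within -{0})"
    by simp
qed auto

lemma intA:
  fixes k n :: int assumes "k \<ge> 0"
  shows "((\<lambda>w::complex. w powi k * (1-w) powi (-n)) has_contour_integral 0) (circlepath 0 (1/2))"
proof (rule Cauchy_theorem_disc_simple[where a=0 and e=1])
  have "\<forall>w\<in>ball (0::complex) 1. 1 - w \<noteq> 0" by auto
  then show "(\<lambda>w::complex. w powi k * (1-w) powi (-n)) holomorphic_on ball 0 1"
    using assms by (intro holomorphic_intros) auto
qed auto

lemma intB:
  fixes k n :: int assumes "n \<le> 0" "k < n - 1"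
  shows "((\<lambda>w::complex. w powi k * (1-w) powi (-n)) has_contour_integral 0) (circlepath 0 (1/2))"
proof -
  define r where "r = nat (-n)"
  have "((\<lambda>w::complex. \<Sum>j\<le>r. (of_nat (r choose j) * (-1)^j) * w powi (k + int j)) has_contour_integral
        (\<Sum>j\<le>r. (of_nat (r choose j) * (-1)^j) * 0)) (circlepath 0 (1/2))"
  proof (rule has_contour_integral_sum)
    fix j assume "j \<in> {..r}"
    hence "k + int j \<noteq> -1" using assms unfolding r_def by auto
    then show "((\<lambda>w::complex. (of_nat (r choose j) * (-1)^j) * w powi (k + int j)) has_contour_integral
        (of_nat (r choose j) * (-1)^j) * 0) (circlepath 0 (1/2))"
      by (intro has_contour_integral_lmul circ_int_powi)
  qed auto
  hence I: "((\<lambda>w::complex. \<Sum>j\<le>r. (of_nat (r choose j) * (-1)^j) * w powi (k + int j)) has_contour_integral 0) (circlepath 0 (1/2))" by simp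
  show ?thesis
  proof (rule has_contour_integral_eq[OF I])
    fix w :: complex assume "w \<in> path_image (circlepath 0 (1/2))"
    hence w: "w \<noteq> 0" by auto
    have "(1-w) powi (-n) = (-w + 1) ^ r" using assms by (simp add: power_int_def r_def)
    also have "\<dots> = (\<Sum>j\<le>r. of_nat (r choose j) * (-w)^j)" using binomial_ring[of "-w" 1 r] by simp
    finally have "w powi k * (1-w) powi (-n) = (\<Sum>j\<le>r. w powi k * (of_nat (r choose j) * (-w)^j))"
      by (simp only: sum_distrib_left)
    also have "\<dots> = (\<Sum>j\<le>r. (of_nat (r choose j) * (-1)^j) * w powi (k + int j))"
    proof (intro sum.cong refl)
      fix j assume "j \<in> {..r}"
      have "w powi (k + int j) = w powi k * w ^ j" using w by (simp add: power_int_add)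
      then show "w powi k * (of_nat (r choose j) * (-w)^j) = (of_nat (r choose j) * (-1)^j) * w powi (k + int j)"
        by (simp add: power_minus[of w j])
    qed
    finally show "(\<Sum>j\<le>r. (of_nat (r choose j) * (-1)^j) * w powi (k + int j)) = w powi k * (1-w) powi (-n)"
      by (rule sym)
  qed
qed



lemma intZ:
  fixes k n :: int assumes "k \<ge> 0 \<or> (n \<le> 0 \<and> k < n - 1)"
  shows "((\<lambda>w::complex. w powi k * (1-w) powi (-n)) has_contour_integral 0) (circlepath 0 (1/2))"
  using assms intA intB by blast

lemma F0_nz:
  assumes "F p n x 0 \<noteq> 0" shows "x \<le> 0 \<and> (n \<le> 0 \<longrightarrow> n \<le> x)"
proof (rule ccontr)
  assume "\<not> ?thesis"
  hence c: "x - 1 \<ge> 0 \<or> (n \<le> 0 \<and> x - 1 < n - 1)" by auto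
  have "((\<lambda>w. (1 / w) * (complex_of_real (1 - p) + complex_of_real p / w) ^ nat 0
                   * (1 - w) powi (- n) * w powi x) has_contour_integral 0) (circlepath 0 (1/2))"
  proof (rule has_contour_integral_eq[OF intZ[OF c]])
    fix w :: complex assume "w \<in> path_image (circlepath 0 (1/2))"
    hence w: "w \<noteq> 0" by auto
    have "w powi x = w powi (x - 1) * w" using w by (simp add: power_int_diff)
    then show "w powi (x - 1) * (1 - w) powi - n =
         1 / w * (complex_of_real (1 - p) + complex_of_real p / w) ^ nat 0 * (1 - w) powi - n * w powi x"
      using w by (simp add: field_simps)
  qed
  hence "F p n x 0 = 0" unfolding F_def by (simp add: contour_integral_unique)
  with assms show False by simp
qed

lemma F1_nz:
  assumes "F p n x 1 \<noteq> 0" shows "x \<le> 1 \<and> (n \<le> 0 \<longrightarrow> n \<le> x)"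
proof (rule ccontr)
  assume "\<not> ?thesis"
  hence c1: "x - 1 \<ge> 0 \<or> (n \<le> 0 \<and> x - 1 < n - 1)" and c2: "x - 2 \<ge> 0 \<or> (n \<le> 0 \<and> x - 2 < n - 1)" by auto
  have I: "((\<lambda>w. complex_of_real (1 - p) * (w powi (x - 1) * (1 - w) powi (-n))
      + complex_of_real p * (w powi (x - 2) * (1 - w) powi (-n))) has_contour_integral
      (complex_of_real (1 - p) * 0 + complex_of_real p * 0)) (circlepath 0 (1/2))"
    by (intro has_contour_integral_add has_contour_integral_lmul intZ c1 c2)
  have I0: "((\<lambda>w. complex_of_real (1 - p) * (w powi (x - 1) * (1 - w) powi (-n))
      + complex_of_real p * (w powi (x - 2) * (1 - w) powi (-n))) has_contour_integral 0) (circlepath 0 (1/2))"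
    using I by simp
  have "((\<lambda>w. (1 / w) * (complex_of_real (1 - p) + complex_of_real p / w) ^ nat 1
                   * (1 - w) powi (- n) * w powi x) has_contour_integral 0) (circlepath 0 (1/2))"
  proof (rule has_contour_integral_eq[OF I0])
    fix w :: complex assume "w \<in> path_image (circlepath 0 (1/2))"
    hence w: "w \<noteq> 0" by auto
    have e1: "w powi x = w powi (x - 1) * w" using w by (simp add: power_int_diff)
    have "w powi (x - 1) = w powi ((x - 2) + 1)" by simp
    also have "\<dots> = w powi (x - 2) * w powi 1" using w by (rule power_int_add[OF disjI1])
    finally have e3: "w powi (x - 1) = w powi (x - 2) * w" by simp
    show "complex_of_real (1 - p) * (w powi (x - 1) * (1 - w) powi (-n))
      + complex_of_real p * (w powi (x - 2) * (1 - w) powi (-n)) =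
         1 / w * (complex_of_real (1 - p) + complex_of_real p / w) ^ nat 1 * (1 - w) powi - n * w powi x"
      using w by (simp add: field_simps e1 e3)
  qed
  hence "F p n x 1 = 0" unfolding F_def by (simp add: contour_integral_unique)
  with assms show False by simp
qed


lemma mono_u:
  fixes x :: "nat \<Rightarrow> int"
  assumes hx: "\<And>i j. 1 \<le> i \<Longrightarrow> i < j \<Longrightarrow> j \<le> N \<Longrightarrow> x i > x j"
    and ij: "1 \<le> i" "i \<le> j" "j \<le> N"
  shows "x j + int j \<le> x i + int i"
  using ij(2,3)
proof (induction j rule: dec_induct)
  case base then show ?case by simp
next
  case (step j)
  have "x (Suc j) < x j" using hx[of j "Suc j"] step ij(1) by auto
  then show ?case using step by simp
qed

lemma key:
  fixes \<sigma> :: "nat \<Rightarrow> nat" and x y :: "nat \<Rightarrow> int" and c :: int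
  assumes perm: "\<sigma> permutes {1..N}"
    and ux: "\<And>i j. 1\<le>i \<Longrightarrow> i\<le>j \<Longrightarrow> j\<le>N \<Longrightarrow> x j + int j \<le> x i + int i"
    and uy: "\<And>i j. 1\<le>i \<Longrightarrow> i\<le>j \<Longrightarrow> j\<le>N \<Longrightarrow> y j + int j \<le> y i + int i"
    and A: "\<And>i. i\<in>{1..N} \<Longrightarrow> x i - y (\<sigma> i) \<le> c"
    and B: "\<And>i. i\<in>{1..N} \<Longrightarrow> \<sigma> i \<le> i \<Longrightarrow> int (\<sigma> i) - int i \<le> x i - y (\<sigma> i)"
    and i: "i \<in> {1..N}" "\<sigma> i > i"
  shows "int (\<sigma> i) - int i \<le> c \<and> (int (\<sigma> i) - int i = c \<longrightarrow> y (\<sigma> i) + int (\<sigma> i) = x i + int i)"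
proof -
  define j where "j = \<sigma> i"
  have inj: "inj \<sigma>" using permutes_inj[OF perm] .
  have jN: "j \<in> {1..N}" unfolding j_def using permutes_in_image[OF perm] i(1) by simp
  define S where "S = {l \<in> {1..N}. j \<le> l}"
  have "\<exists>l\<in>S. \<sigma> l < j"
  proof (rule ccontr)
    assume "\<not> ?thesis"
    hence "\<sigma> ` S \<subseteq> S" unfolding S_def using permutes_in_image[OF perm] by force
    moreover have "finite S" unfolding S_def by simp
    moreover have "inj_on \<sigma> S" using inj by (meson inj_on_subset subset_UNIV)
    ultimately have "\<sigma> ` S = S" using endo_inj_surj by blast
    moreover have "j \<in> S" unfolding S_def using jN by simp
    ultimately obtain l where l: "l \<in> S" "\<sigma> l = j" by force
    hence "l = i" using inj unfolding j_def by (simp add: inj_eq)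
    with l i show False unfolding S_def j_def by simp
  qed
  then obtain l where l: "l \<in> {1..N}" "j \<le> l" "\<sigma> l < j" unfolding S_def by auto
  define j' where "j' = \<sigma> l"
  have j'N: "j' \<in> {1..N}" unfolding j'_def using permutes_in_image[OF perm] l(1) by simp
  have b: "int j' - int l \<le> x l - y j'" using B[OF l(1)] l unfolding j'_def by simp
  have a: "x i - y j \<le> c" using A[OF i(1)] unfolding j_def .
  have v: "y j + int j \<le> y j' + int j'" using uy[of j' j] j'N jN l unfolding j'_def by simp
  have u: "x l + int l \<le> x i + int i" using ux[of i l] i l unfolding j_def by simp
  from a b u v show ?thesis unfolding j_def by linarith
qed



theorem lemma4:
  fixes p :: real and N :: nat and \<sigma> :: "nat \<Rightarrow> nat" and x y :: "nat \<Rightarrow> int" and t :: int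
  assumes hp: "0 < p" "p < 1"
    and hN: "N \<ge> 1"
    and h\<sigma>: "\<sigma> permutes {1..N}"
    and hx: "\<And>i j. 1 \<le> i \<Longrightarrow> i < j \<Longrightarrow> j \<le> N \<Longrightarrow> x i > x j"
    and hy: "\<And>i j. 1 \<le> i \<Longrightarrow> i < j \<Longrightarrow> j \<le> N \<Longrightarrow> y i > y j"
  shows
    "(t = 0 \<longrightarrow>
        (\<Prod>i=1..N. F p (int (\<sigma> i) - int i) (x i - y (\<sigma> i)) t) \<noteq> 0 \<longrightarrow>
        (\<forall>i\<in>{1..N}. \<sigma> i = i) \<and> (\<forall>i\<in>{1..N}. x i = y i))
     \<and>
     (t = 1 \<longrightarrow>
        (\<forall>i1 k. i1 \<in> {1..N} \<and> k > 1 \<and> (\<sigma> ^^ k) i1 = i1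
                 \<and> (\<forall>j\<in>{1..<k}. (\<sigma> ^^ j) i1 \<noteq> i1) \<longrightarrow>
          (\<Prod>i=1..N. F p (int (\<sigma> i) - int i) (x i - y (\<sigma> i)) t) \<noteq> 0 \<longrightarrow>
          (\<exists>s<k. let a = (\<sigma> ^^ s) i1 in
              (\<forall>j<k. (\<sigma> ^^ j) a = a + j)
              \<and> y a = x a
              \<and> (\<forall>j\<in>{1..<k}. x (a + j) = x a - int j \<and> y (a + j) = x a - int j))))"
proof -
  have inj: "inj \<sigma>" using permutes_inj[OF h\<sigma>] .
  have hin: "\<And>i. i \<in> {1..N} \<Longrightarrow> \<sigma> i \<in> {1..N}" using permutes_in_image[OF h\<sigma>] by simp
  have ux: "\<And>i j. 1\<le>i \<Longrightarrow> i\<le>j \<Longrightarrow> j\<le>N \<Longrightarrow> x j + int j \<le> x i + int i"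
    using mono_u[of N x] hx by blast
  have uy: "\<And>i j. 1\<le>i \<Longrightarrow> i\<le>j \<Longrightarrow> j\<le>N \<Longrightarrow> y j + int j \<le> y i + int i"
    using mono_u[of N y] hy by blast
  have fac: "F p (int (\<sigma> i) - int i) (x i - y (\<sigma> i)) t \<noteq> 0"
    if "(\<Prod>i=1..N. F p (int (\<sigma> i) - int i) (x i - y (\<sigma> i)) t) \<noteq> 0" "i \<in> {1..N}" for i
    using that by (simp add: prod_zero_iff)
  have part1: "(\<forall>i\<in>{1..N}. \<sigma> i = i) \<and> (\<forall>i\<in>{1..N}. x i = y i)"
    if t0: "t = 0" and P: "(\<Prod>i=1..N. F p (int (\<sigma> i) - int i) (x i - y (\<sigma> i)) t) \<noteq> 0"
  proof -
    have nz: "x i - y (\<sigma> i) \<le> 0 \<and> (int (\<sigma> i) - int i \<le> 0 \<longrightarrow> int (\<sigma> i) - int i \<le> x i - y (\<sigma> i))"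
      if "i \<in> {1..N}" for i
      using F0_nz fac[OF P that] t0 by blast
    have A: "\<And>i. i\<in>{1..N} \<Longrightarrow> x i - y (\<sigma> i) \<le> 0" using nz by blast
    have B: "\<And>i. i\<in>{1..N} \<Longrightarrow> \<sigma> i \<le> i \<Longrightarrow> int (\<sigma> i) - int i \<le> x i - y (\<sigma> i)" using nz by force
    have le: "\<sigma> i \<le> i" if "i \<in> {1..N}" for i
    proof (rule ccontr)
      assume "\<not> \<sigma> i \<le> i"
      hence "\<sigma> i > i" by simp
      from key[OF h\<sigma> ux uy A B that this] this show False by linarith
    qed
    have eq: "\<forall>i\<in>{1..N}. \<sigma> i = i"
    proof (rule ccontr)
      assume "\<not> ?thesis"
      then obtain i where "i \<in> {1..N}" "\<sigma> i < i" using le by force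
      hence "sum \<sigma> {1..N} < sum (\<lambda>i. i) {1..N}"
        using le by (intro sum_strict_mono_ex1) auto
      moreover have "sum (\<lambda>i. i) {1..N} = sum ((\<lambda>i. i) \<circ> \<sigma>) {1..N}"
        by (rule sum.permute[OF h\<sigma>])
      ultimately show False by (simp add: o_def)
    qed
    moreover have "\<forall>i\<in>{1..N}. x i = y i"
    proof
      fix i assume i: "i \<in> {1..N}"
      from nz[OF i] eq i show "x i = y i" by force
    qed
    ultimately show ?thesis by blast
  qed
  have part2: "\<exists>s<k. let a = (\<sigma> ^^ s) i1 in
              (\<forall>j<k. (\<sigma> ^^ j) a = a + j)
              \<and> y a = x a
              \<and> (\<forall>j\<in>{1..<k}. x (a + j) = x a - int j \<and> y (a + j) = x a - int j)"
    if t1: "t = 1" and cyc: "i1 \<in> {1..N}" "k > 1" "(\<sigma> ^^ k) i1 = i1" "\<forall>j\<in>{1..<k}. (\<sigma> ^^ j) i1 \<noteq> i1"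
      and P: "(\<Prod>i=1..N. F p (int (\<sigma> i) - int i) (x i - y (\<sigma> i)) t) \<noteq> 0" for i1 k
  proof -
    have nz: "x i - y (\<sigma> i) \<le> 1 \<and> (int (\<sigma> i) - int i \<le> 0 \<longrightarrow> int (\<sigma> i) - int i \<le> x i - y (\<sigma> i))"
      if "i \<in> {1..N}" for i
      using F1_nz fac[OF P that] t1 by blast
    have A: "\<And>i. i\<in>{1..N} \<Longrightarrow> x i - y (\<sigma> i) \<le> 1" using nz by blast
    have B: "\<And>i. i\<in>{1..N} \<Longrightarrow> \<sigma> i \<le> i \<Longrightarrow> int (\<sigma> i) - int i \<le> x i - y (\<sigma> i)" using nz by force
    have asc: "\<sigma> i = i + 1 \<and> y (i + 1) + int (i + 1) = x i + int i" if "i \<in> {1..N}" "\<sigma> i > i" for i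
    proof -
      have k: "int (\<sigma> i) - int i \<le> 1 \<and> (int (\<sigma> i) - int i = 1 \<longrightarrow> y (\<sigma> i) + int (\<sigma> i) = x i + int i)"
        using key[OF h\<sigma> ux uy A B that] .
      have e: "\<sigma> i = i + 1" using k that(2) by linarith
      then show ?thesis using k by simp
    qed
    have orbN: "(\<sigma> ^^ j) z \<in> {1..N}" if "z \<in> {1..N}" for j z
    proof (induction j)
      case (Suc j) then show ?case using hin[OF Suc.IH] by simp
    qed (use that in simp)
    have injf: "inj (\<sigma> ^^ m)" for m using inj by simp
    have comm: "(\<sigma> ^^ m) ((\<sigma> ^^ n) z) = (\<sigma> ^^ n) ((\<sigma> ^^ m) z)" for m n z
      by (metis add.commute comp_apply funpow_add)
    define Orb where "Orb = (\<lambda>j. (\<sigma> ^^ j) i1) ` {..<k}"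
    have Ofin: "finite Orb" "Orb \<noteq> {}" unfolding Orb_def using cyc by auto
    define a where "a = Min Orb"
    have "a \<in> Orb" unfolding a_def using Ofin by simp
    then obtain s where s: "s < k" "a = (\<sigma> ^^ s) i1" unfolding Orb_def by auto
    have Oclosed: "\<sigma> z \<in> Orb" if "z \<in> Orb" for z
    proof -
      obtain j where j: "j < k" "z = (\<sigma> ^^ j) i1" using \<open>z \<in> Orb\<close> unfolding Orb_def by auto
      show ?thesis
      proof (cases "Suc j < k")
        case True
        then show ?thesis unfolding Orb_def j by (auto intro!: image_eqI[where x="Suc j"])
      next
        case False
        hence "Suc j = k" using j by simp
        hence "\<sigma> z = (\<sigma> ^^ 0) i1" using cyc(3) j by (metis comp_apply funpow.simps(2) funpow_0)
        then show ?thesis unfolding Orb_def using cyc(2) by (auto intro!: image_eqI[where x=0])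
      qed
    qed
    have aO: "(\<sigma> ^^ j) a \<in> Orb" for j
      using \<open>a \<in> Orb\<close> by (induction j) (auto intro: Oclosed)
    have ge: "(\<sigma> ^^ j) a \<ge> a" for j unfolding a_def using aO[of j] Ofin by (simp add: a_def)
    have aN: "a \<in> {1..N}" using s orbN cyc(1) by simp
    have per: "(\<sigma> ^^ d) a \<noteq> a" if "d \<in> {1..<k}" for d
    proof
      assume "(\<sigma> ^^ d) a = a"
      hence "(\<sigma> ^^ s) ((\<sigma> ^^ d) i1) = (\<sigma> ^^ s) i1" using s comm by metis
      hence "(\<sigma> ^^ d) i1 = i1" using injf[of s] by (simp add: inj_eq)
      with cyc(4) that show False by blast
    qed
    have perk: "(\<sigma> ^^ k) a = a" using s comm cyc(3) by metis
    have shape: "j < k \<longrightarrow> (\<forall>m\<le>j. (\<sigma> ^^ m) a = a + m)" for j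
    proof (induction j)
      case 0 then show ?case by simp
    next
      case (Suc j)
      show ?case
      proof
        assume jk: "Suc j < k"
        with Suc.IH have IH: "\<forall>m\<le>j. (\<sigma> ^^ m) a = a + m" by simp
        define b where "b = a + j"
        have bj: "(\<sigma> ^^ j) a = b" using IH b_def by simp
        have bN: "b \<in> {1..N}" using orbN[OF aN, of j] bj by simp
        have sj: "(\<sigma> ^^ Suc j) a = \<sigma> b" using bj by simp
        have "\<sigma> b = b + 1"
        proof (cases "\<sigma> b > b")
          case True then show ?thesis using asc[OF bN] by simp
        next
          case False
          define m where "m = \<sigma> b - a"
          have "\<sigma> b \<ge> a" using ge[of "Suc j"] sj by simp
          hence m: "m \<le> j" "\<sigma> b = a + m" using False unfolding m_def b_def by auto
          hence "(\<sigma> ^^ Suc j) a = (\<sigma> ^^ m) a" using sj IH by simp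
          hence "(\<sigma> ^^ m) ((\<sigma> ^^ (Suc j - m)) a) = (\<sigma> ^^ m) a"
            using m(1) by (metis Suc_leI comp_apply funpow_add le_SucI le_add_diff_inverse)
          hence "(\<sigma> ^^ (Suc j - m)) a = a" using injf[of m] by (simp add: inj_eq)
          moreover have "Suc j - m \<in> {1..<k}" using m(1) jk by auto
          ultimately show ?thesis using per by blast
        qed
        then show "\<forall>m\<le>Suc j. (\<sigma> ^^ m) a = a + m" using IH sj b_def by (auto simp: le_Suc_eq)
      qed
    qed
    have sh: "(\<sigma> ^^ j) a = a + j" if "j < k" for j using shape[of j] that by simp
    have jN: "a + j \<in> {1..N}" if "j < k" for j using orbN[OF aN, of j] sh[OF that] by simp
    define L where "L = a + (k - 1)"
    have LN: "L \<in> {1..N}" unfolding L_def using jN[of "k - 1"] cyc(2) by simp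
    have sL: "\<sigma> L = a"
    proof -
      have kk: "k = Suc (k - 1)" using cyc(2) by simp
      have "(\<sigma> ^^ k) a = \<sigma> ((\<sigma> ^^ (k - 1)) a)" by (metis kk funpow.simps(2) comp_apply)
      also have "(\<sigma> ^^ (k - 1)) a = L" using sh[of "k-1"] cyc(2) unfolding L_def by simp
      finally show ?thesis using perk by simp
    qed
    have bL: "int a - int L \<le> x L - y a" using B[OF LN] sL unfolding L_def by simp
    have ascj: "y (a + j) + int (a + j) = x (a + j - 1) + int (a + j - 1)" if "j \<in> {1..<k}" for j
    proof -
      have jj: "j = Suc (j - 1)" using that by simp
      have "(\<sigma> ^^ j) a = \<sigma> ((\<sigma> ^^ (j - 1)) a)" by (metis jj funpow.simps(2) comp_apply)
      also have "(\<sigma> ^^ (j - 1)) a = a + (j - 1)" using sh[of "j-1"] that by auto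
      finally have "\<sigma> (a + (j - 1)) = (\<sigma> ^^ j) a" by simp
      also have "\<dots> = a + j" using sh[of j] that by simp
      finally have e: "\<sigma> (a + (j - 1)) = a + (j - 1) + 1" using that by simp
      have "a + (j - 1) \<in> {1..N}" using jN[of "j-1"] that by auto
      with asc[of "a + (j-1)"] e have "y (a + (j - 1) + 1) + int (a + (j - 1) + 1) = x (a + (j - 1)) + int (a + (j - 1))" by simp
      moreover have "a + (j - 1) + 1 = a + j" "a + (j - 1) = a + j - 1" using that by auto
      ultimately show ?thesis by simp
    qed
    have y1: "y (a + 1) + int (a + 1) = x a + int a" using ascj[of 1] cyc(2) by simp
    have vy: "y (a + 1) + int (a + 1) \<le> y a + int a" using uy[of a "a+1"] aN jN[of 1] cyc(2) by simp
    have uxL: "x L + int L \<le> x (a + j) + int (a + j)" if "j < k" for j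
      using ux[of "a+j" L] jN[OF that] LN that unfolding L_def by simp
    have uxa: "x (a + j) + int (a + j) \<le> x a + int a" if "j < k" for j
      using ux[of a "a+j"] jN[OF that] aN by simp
    have ya: "y a = x a" using y1 vy bL uxL[of 0] cyc(2) by simp
    have xj: "x (a + j) = x a - int j" if "j < k" for j
      using y1 vy bL uxL[OF that] uxa[OF that] by simp
    have yj: "y (a + j) = x a - int j" if "j \<in> {1..<k}" for j
    proof -
      have "x (a + j - 1) = x a - int (j - 1)" using xj[of "j-1"] that
        by (metis Nat.add_diff_assoc atLeastLessThan_iff less_imp_diff_less linorder_not_less not_one_le_zero)
      then show ?thesis using ascj[OF that] that by auto
    qed
    show ?thesis using s sh ya xj yj unfolding Let_def by (intro exI[of _ s]) auto
  qed
  show ?thesis using part1 part2 by blast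
qed

end
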